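(* Let $q$ be a positive integer and let $\mathcal{T}_q=(\tau_1,\ldots,\tau_q)$ be the permutation ideal. Identify each vertex $\ell_{i,j}$ ($1\le i\le j\le q$) of $\mathbb{M}_q^2$ with the monomial $\tau_i\tau_j$. Then the Scarf complex of $\mathcal{T}_q^{\,2}$ coincides with $\mathbb{M}_q^2$, i.e. $\operatorname{Scarf}(\mathcal{T}_q^{\,2})=\mathbb{M}_q^2$.
   Context: Permutation ideal: let $S_q$ be the symmetric group on $[q]=\{1,\ldots,q\}$; for $\sigma\in S_q$ written in one-line notation $\sigma=i_1i_2\cdots i_q$, $\sigma(j)=i_j$. Let $K$ be a field and $S_{\mathcal{T}}=K[x_\sigma:\sigma\in S_q]$ (one variable per permutation). For $i\in[q]$ put $\tau_i=\prod_{\sigma\in S_q}x_\sigma^{\sigma(i)}$, and $\mathcal{T}_q=(\tau_1,\ldots,\tau_q)$. The monomials $\tau_i\tau_j$, $1\le i\le j\le q$, are pairwise distinct and form the minimal generating set of $\mathcal{T}_q^{\,2}$. $\mathbb{M}_q^2$: vertex set $\{\ell_{i,j}:1\le i\le j\le q\}$, $\mathcal{M}=\{\ell_{i,j}:i<j\}$, facets $\mathcal{M}_i=\mathcal{M}\cup\{\ell_{i,i}\}$, $i\in[q]$; $\mathbb{M}_q^2=\langle\mathcal{M}_1,\ldots,\mathcal{M}_q\rangle$ is the simplicial complex with these facets. Scarf complex: for a monomial ideal $J$ minimally generated by monomials $g_1,\ldots,g_r$, the Taylor complex $\operatorname{Taylor}(J)$ is the full simplex on vertices $g_1,\ldots,g_r$,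 each face $\gamma$ labeled by $m_\gamma=\operatorname{lcm}$ of its vertices. $\operatorname{Scarf}(J)=\{\gamma\in\operatorname{Taylor}(J): m_\gamma\ne m_{\gamma'}\text{ for all }\gamma'\in\operatorname{Taylor}(J),\ \gamma'\neq\gamma\}$. *)

theory Defs
  imports "HOL-Combinatorics.Permutations"
begin

text \<open>Permutations of [q] are functions nat => nat that permute {1..q} (identity outside).
  A monomial in the variables x_sigma (sigma in S_q) is represented by its exponent vector,
  a function from permutations to nat (zero outside S_q). The field K plays no role.\<close>

type_synonym monomial = "(nat \<Rightarrow> nat) \<Rightarrow> nat"

definition mono_mult :: "monomial \<Rightarrow> monomial \<Rightarrow> monomial" where
  "mono_mult m n = (\<lambda>\<sigma>. m \<sigma> + n \<sigma>)"

text \<open>tau_i = prod over sigma in S_q of x_sigma^(sigma(i)).\<close>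
definition tau :: "nat \<Rightarrow> nat \<Rightarrow> monomial" where
  "tau q i = (\<lambda>\<sigma>. if \<sigma> permutes {1..q} then \<sigma> i else 0)"

text \<open>lcm of a finite set of monomials (lcm of the empty set is the monomial 1).\<close>
definition mono_lcm :: "monomial set \<Rightarrow> monomial" where
  "mono_lcm F = (\<lambda>\<sigma>. Max (insert 0 ((\<lambda>m. m \<sigma>) ` F)))"

text \<open>Taylor complex on a generating set G: all subsets of G (faces labelled by lcm).\<close>
definition taylor :: "monomial set \<Rightarrow> monomial set set" where
  "taylor G = Pow G"

definition scarf :: "monomial set \<Rightarrow> monomial set set" where
  "scarf G = {\<gamma> \<in> taylor G. \<forall>\<gamma>' \<in> taylor G. \<gamma>' \<noteq> \<gamma> \<longrightarrow> mono_lcm \<gamma>' \<noteq> mono_lcm \<gamma>}"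

definition ell :: "nat \<Rightarrow> nat \<times> nat \<Rightarrow> monomial" where
  "ell q p = mono_mult (tau q (fst p)) (tau q (snd p))"

definition Tq2_gens :: "nat \<Rightarrow> monomial set" where
  "Tq2_gens q = ell q ` {(i, j). 1 \<le> i \<and> i \<le> j \<and> j \<le> q}"

text \<open>The complex M_q^2 on vertices l_{i,j} (encoded as pairs (i,j)).\<close>
definition M_off :: "nat \<Rightarrow> (nat \<times> nat) set" where
  "M_off q = {(i, j). 1 \<le> i \<and> i < j \<and> j \<le> q}"

definition M_facet :: "nat \<Rightarrow> nat \<Rightarrow> (nat \<times> nat) set" where
  "M_facet q i = insert (i, i) (M_off q)"

definition M_complex :: "nat \<Rightarrow> (nat \<times> nat) set set" where
  "M_complex q = {F. \<exists>i \<in> {1..q}. F \<subseteq> M_facet q i}"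

end

theory Submission
  imports Defs
begin

definition PP :: "nat \<Rightarrow> (nat \<times> nat) set" where
  "PP q = {(i, j). 1 \<le> i \<and> i \<le> j \<and> j \<le> q}"

lemma finite_PP: "finite (PP q)"
proof -
  have "PP q \<subseteq> {1..q} \<times> {1..q}" unfolding PP_def by auto
  then show ?thesis by (rule finite_subset) auto
qed

lemma ell_val: "ell q p \<sigma> = (if \<sigma> permutes {1..q} then \<sigma> (fst p) + \<sigma> (snd p) else 0)"
  unfolding ell_def mono_mult_def tau_def by auto

lemma perm1:
  assumes "a \<in> {1..q}" "x \<in> {1..q}"
  shows "\<exists>\<sigma>. \<sigma> permutes {1..q} \<and> \<sigma> a = x"
proof -
  have "transpose a x permutes {1..q}" by (rule permutes_swap_id[OF assms])
  moreover have "transpose a x a = x" by (rule transpose_apply_first)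
  ultimately show ?thesis by blast
qed

lemma perm_facts:
  assumes "\<sigma> permutes {1..q}" "i \<in> {1..q}"
  shows "1 \<le> \<sigma> i" "\<sigma> i \<le> q"
proof -
  have "\<sigma> i \<in> {1..q}" by (rule permutes_in_image[THEN iffD2, OF assms(1) assms(2)])
  then show "1 \<le> \<sigma> i" "\<sigma> i \<le> q" by simp_all
qed

lemma perm_inj:
  assumes "\<sigma> permutes {1..q}" "\<sigma> i = \<sigma> j" shows "i = j"
proof -
  have "inj \<sigma>" by (rule permutes_inj[OF assms(1)])
  then show ?thesis using assms(2) by (rule injD)
qed

lemma perm2:
  assumes "a \<in> {1..q}" "x \<in> {1..q}" "b \<in> {1..q}" "y \<in> {1..q}" "a \<noteq> b" "x \<noteq> y"
  shows "\<exists>\<sigma>. \<sigma> permutes {1..q} \<and> \<sigma> a = x \<and> \<sigma> b = y"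
proof -
  define t where "t = transpose a x"
  have t: "t permutes {1..q}" unfolding t_def by (rule permutes_swap_id[OF assms(1,2)])
  have ta: "t a = x" unfolding t_def by (rule transpose_apply_first)
  have tb: "t b \<in> {1..q}" by (rule permutes_in_image[THEN iffD2, OF t assms(3)])
  have tbx: "t b \<noteq> x"
  proof
    assume "t b = x"
    then have "t b = t a" using ta by simp
    then have "b = a" by (rule perm_inj[OF t])
    then show False using assms(5) by simp
  qed
  define s where "s = transpose (t b) y \<circ> t"
  have "s permutes {1..q}" unfolding s_def
    by (rule permutes_compose[OF t permutes_swap_id[OF tb assms(4)]])
  moreover have "s a = x" unfolding s_def using ta tbx[symmetric] assms(6)
    by (simp add: transpose_apply_other)
  moreover have "s b = y" unfolding s_def by simp
  ultimately show ?thesis by blast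
qed

lemma key:
  assumes e: "e \<in> PP q" and c: "c \<in> {1..q}"
  shows "\<exists>\<sigma>. \<sigma> permutes {1..q} \<and> (\<forall>p\<in>PP q. p \<noteq> e \<longrightarrow> (fst p \<noteq> snd p \<or> p = (c,c)) \<longrightarrow>
     \<sigma> (fst p) + \<sigma> (snd p) < \<sigma> (fst e) + \<sigma> (snd e))"
proof -
  obtain a b where eab: "e = (a,b)" "1 \<le> a" "a \<le> b" "b \<le> q" using e unfolding PP_def by auto
  show ?thesis
  proof (cases "a = b")
    case True
    obtain \<sigma> where s: "\<sigma> permutes {1..q}" "\<sigma> a = q" using perm1[of a q q] eab by auto
    have H: "\<sigma> i + \<sigma> j < \<sigma> a + \<sigma> b" if "(i,j) \<in> PP q" "(i,j) \<noteq> e" "i \<noteq> j \<or> (i,j) = (c,c)" for i j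
    proof -
      have ij: "i \<in> {1..q}" "j \<in> {1..q}" using that(1) unfolding PP_def by auto
      have "\<sigma> i \<le> q" "\<sigma> j \<le> q" using perm_facts[OF s(1)] ij by auto
      moreover have "i \<noteq> j \<Longrightarrow> \<sigma> i \<noteq> \<sigma> j" using perm_inj[OF s(1)] by blast
      moreover have "i = j \<Longrightarrow> \<sigma> i \<noteq> q" using perm_inj[OF s(1), of i a] s(2) that(2) eab True by auto
      moreover have "\<sigma> a + \<sigma> b = 2*q" using s True by simp
      ultimately show ?thesis
      proof (cases "i = j")
        case True
        then have "\<sigma> i < q" using \<open>i = j \<Longrightarrow> \<sigma> i \<noteq> q\<close> \<open>\<sigma> i \<le> q\<close> by linarith
        then show ?thesis using True \<open>\<sigma> a + \<sigma> b = 2*q\<close> by simp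
      next
        case False
        then have "\<sigma> i \<noteq> \<sigma> j" using \<open>i \<noteq> j \<Longrightarrow> \<sigma> i \<noteq> \<sigma> j\<close> by blast
        then have "\<sigma> i < q \<or> \<sigma> j < q" using \<open>\<sigma> i \<le> q\<close> \<open>\<sigma> j \<le> q\<close> by linarith
        then show ?thesis using \<open>\<sigma> i \<le> q\<close> \<open>\<sigma> j \<le> q\<close> \<open>\<sigma> a + \<sigma> b = 2*q\<close> by linarith
      qed
    qed
    show ?thesis
    proof (intro exI[of _ \<sigma>] conjI ballI impI)
      show "\<sigma> permutes {1..q}" by (rule s(1))
      fix p assume p: "p \<in> PP q" "p \<noteq> e" "fst p \<noteq> snd p \<or> p = (c,c)"
      obtain i j where pij: "p = (i,j)" by (cases p)
      show "\<sigma> (fst p) + \<sigma> (snd p) < \<sigma> (fst e) + \<sigma> (snd e)"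
        using H[of i j] p pij eab(1) by simp
    qed
  next
    case False
    define u where "u = (if c = a then b else a)"
    define v where "v = (if c = a then a else b)"
    have uv: "u \<noteq> v" "u \<in> {1..q}" "v \<in> {1..q}" "{u,v} = {a,b}" "c \<noteq> u"
      using False eab c unfolding u_def v_def by auto
    have q2: "q \<ge> 2" using False eab by auto
    have "\<exists>\<sigma>. \<sigma> permutes {1..q} \<and> \<sigma> u = q \<and> \<sigma> v = q - 1"
      using perm2[of u q q v "q - 1"] uv q2 by auto
    then obtain \<sigma> where s: "\<sigma> permutes {1..q}" "\<sigma> u = q" "\<sigma> v = q - 1" by blast
    have sab: "\<sigma> a + \<sigma> b = 2*q - 1" using uv(4) s False q2
      by (cases "c = a") (auto simp: u_def v_def)
    have H: "\<sigma> i + \<sigma> j < \<sigma> a + \<sigma> b" if "(i,j) \<in> PP q" "(i,j) \<noteq> e" "i \<noteq> j \<or> (i,j) = (c,c)" for i j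
    proof -
      have ij: "i \<in> {1..q}" "j \<in> {1..q}" "i \<le> j" using that(1) unfolding PP_def by auto
      have le: "\<sigma> i \<le> q" "\<sigma> j \<le> q" using perm_facts[OF s(1)] ij by auto
      have inj: "\<And>x y. \<sigma> x = \<sigma> y \<Longrightarrow> x = y" using perm_inj[OF s(1)] by blast
      show ?thesis
      proof (cases "i = j")
        case True
        then have "i = c" using that(3) by auto
        then have "\<sigma> i \<noteq> q" using inj[of i u] s(2) uv by auto
        then have "\<sigma> i < q" using le by linarith
        moreover have "\<sigma> i + \<sigma> j = 2 * \<sigma> i" using True by simp
        ultimately show ?thesis using sab q2 by linarith
      next
        case ne: False
        have "\<sigma> i \<noteq> \<sigma> j" using inj ne by blast
        show ?thesis
        proof (rule ccontr)
          assume "\<not> ?thesis"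
          then have h: "\<sigma> i + \<sigma> j \<ge> 2*q - 1" using sab by linarith
          have "(\<sigma> i = q \<and> \<sigma> j = q - 1) \<or> (\<sigma> i = q - 1 \<and> \<sigma> j = q)"
            using h le \<open>\<sigma> i \<noteq> \<sigma> j\<close> by linarith
          then have "(i = u \<and> j = v) \<or> (i = v \<and> j = u)"
            using inj[of i u] inj[of j v] inj[of i v] inj[of j u] s(2,3) by metis
          then have "(i = a \<and> j = b) \<or> (i = b \<and> j = a)" using uv(4) uv(1)
            by (metis doubleton_eq_iff)
          then have "(i,j) = (a,b)" using ij(3) eab False ne by auto
          then show False using that(2) eab by simp
        qed
      qed
    qed
    show ?thesis
    proof (intro exI[of _ \<sigma>] conjI ballI impI)
      show "\<sigma> permutes {1..q}" by (rule s(1))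
      fix p assume p: "p \<in> PP q" "p \<noteq> e" "fst p \<noteq> snd p \<or> p = (c,c)"
      obtain i j where pij: "p = (i,j)" by (cases p)
      show "\<sigma> (fst p) + \<sigma> (snd p) < \<sigma> (fst e) + \<sigma> (snd e)"
        using H[of i j] p pij eab(1) by simp
    qed
  qed
qed


lemma gens_eq: "Tq2_gens q = ell q ` PP q"
  unfolding Tq2_gens_def PP_def by simp

lemma ell_inj: "inj_on (ell q) (PP q)"
proof (rule inj_onI, rule ccontr)
  fix p e assume p: "p \<in> PP q" and e: "e \<in> PP q" and eq: "ell q p = ell q e" and ne: "p \<noteq> e"
  have c: "fst p \<in> {1..q}" using p unfolding PP_def by auto
  obtain \<sigma> where s: "\<sigma> permutes {1..q}" and
    H: "\<forall>p'\<in>PP q. p' \<noteq> e \<longrightarrow> (fst p' \<noteq> snd p' \<or> p' = (fst p, fst p)) \<longrightarrow>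
     \<sigma> (fst p') + \<sigma> (snd p') < \<sigma> (fst e) + \<sigma> (snd e)"
    using key[OF e c] by blast
  have "fst p \<noteq> snd p \<or> p = (fst p, fst p)" by (cases p) auto
  then have "\<sigma> (fst p) + \<sigma> (snd p) < \<sigma> (fst e) + \<sigma> (snd e)" using H p ne by blast
  moreover have "ell q p \<sigma> = ell q e \<sigma>" using eq by simp
  ultimately show False using s by (simp add: ell_val)
qed

lemma lcm_eval: "mono_lcm (ell q ` A) \<sigma> = Max (insert 0 ((\<lambda>p. ell q p \<sigma>) ` A))"
  unfolding mono_lcm_def by (simp add: image_image)

lemma max_ge: "finite A \<Longrightarrow> x \<in> A \<Longrightarrow> (f x :: nat) \<le> Max (insert 0 (f ` A))"
  by (rule Max_ge) auto

lemma max_lt: "finite A \<Longrightarrow> \<forall>x\<in>A. f x < v \<Longrightarrow> (0::nat) < v \<Longrightarrow> Max (insert 0 (f ` A)) < v"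
  by (simp add: Max_less_iff)

lemma max_insert_absorb:
  assumes "finite A" "y \<in> A" "(f e :: nat) \<le> f y"
  shows "Max (insert 0 (f ` insert e A)) = Max (insert 0 (f ` A))"
proof -
  have "insert 0 (f ` insert e A) = insert (f e) (insert 0 (f ` A))" by auto
  moreover have "f e \<le> Max (insert 0 (f ` A))" using max_ge[OF assms(1,2), of f] assms(3) by linarith
  ultimately show ?thesis using assms(1) by (simp add: max_def)
qed

lemma sub_gens:
  assumes "\<gamma> \<subseteq> ell q ` PP q" shows "\<exists>F. F \<subseteq> PP q \<and> \<gamma> = ell q ` F"
  using assms by (simp add: subset_image_iff)

lemma diag_unique:
  assumes sc: "ell q ` F \<in> scarf (Tq2_gens q)" and F: "F \<subseteq> PP q"
    and a: "(a,a) \<in> F" and b: "(b,b) \<in> F"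
  shows "a = b"
proof (rule ccontr)
  assume ab: "a \<noteq> b"
  define e where "e = (min a b, max a b)"
  have eP: "e \<in> PP q" using a b F ab unfolding e_def PP_def by auto
  have finF: "finite F" using F finite_PP finite_subset by blast
  define F' where "F' = (if e \<in> F then F - {e} else insert e F)"
  have F'P: "F' \<subseteq> PP q" using F eP unfolding F'_def by auto
  have neq: "ell q ` F' \<noteq> ell q ` F"
  proof
    assume h: "ell q ` F' = ell q ` F"
    have "ell q e \<in> ell q ` F \<longleftrightarrow> e \<in> F"
      using inj_on_image_mem_iff[OF ell_inj eP F] .
    moreover have "ell q e \<in> ell q ` F' \<longleftrightarrow> e \<in> F'"
      using inj_on_image_mem_iff[OF ell_inj eP F'P] .
    ultimately show False using h unfolding F'_def by auto
  qed
  have bound: "ell q e \<sigma> \<le> ell q (a,a) \<sigma> \<or> ell q e \<sigma> \<le> ell q (b,b) \<sigma>" for \<sigma>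
    unfolding ell_val e_def by (auto simp: min_def max_def)
  have abF: "(a,a) \<in> F - {e}" "(b,b) \<in> F - {e}" using a b ab unfolding e_def by auto
  have "mono_lcm (ell q ` F') = mono_lcm (ell q ` F)"
  proof
    fix \<sigma>
    let ?f = "\<lambda>p. ell q p \<sigma>"
    have ex: "\<exists>y\<in>F - {e}. ?f e \<le> ?f y" using bound[of \<sigma>] abF by blast
    show "mono_lcm (ell q ` F') \<sigma> = mono_lcm (ell q ` F) \<sigma>"
    proof (cases "e \<in> F")
      case True
      then have FF: "F = insert e (F - {e})" by auto
      obtain y where "y \<in> F - {e}" "?f e \<le> ?f y" using ex by blast
      then have "Max (insert 0 (?f ` insert e (F - {e}))) = Max (insert 0 (?f ` (F - {e})))"
        using max_insert_absorb[of "F - {e}" y ?f e] finF by auto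
      then show ?thesis unfolding lcm_eval F'_def using True FF by metis
    next
      case False
      obtain y where "y \<in> F - {e}" "?f e \<le> ?f y" using ex by blast
      then have "Max (insert 0 (?f ` insert e F)) = Max (insert 0 (?f ` F))"
        using max_insert_absorb[of F y ?f e] finF by auto
      then show ?thesis unfolding lcm_eval F'_def using False by simp
    qed
  qed
  moreover have "ell q ` F' \<in> taylor (Tq2_gens q)"
    using F'P unfolding taylor_def gens_eq by auto
  ultimately show False using sc neq unfolding scarf_def by blast
qed

theorem theorem2:
  fixes q :: nat
  assumes "1 \<le> q"
  shows "scarf (Tq2_gens q) = (\<lambda>F. ell q ` F) ` M_complex q"
proof
  show "scarf (Tq2_gens q) \<subseteq> (\<lambda>F. ell q ` F) ` M_complex q"
  proof
    fix \<gamma> assume g: "\<gamma> \<in> scarf (Tq2_gens q)"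
    then have "\<gamma> \<subseteq> ell q ` PP q" unfolding scarf_def taylor_def gens_eq by auto
    then obtain F where F: "F \<subseteq> PP q" "\<gamma> = ell q ` F" using sub_gens by blast
    have du: "\<And>a b. (a,a) \<in> F \<Longrightarrow> (b,b) \<in> F \<Longrightarrow> a = b"
      using diag_unique[of q F] g F by blast
    have "F \<in> M_complex q"
    proof (cases "\<exists>a. (a,a) \<in> F")
      case True
      then obtain a where a: "(a,a) \<in> F" by blast
      have "a \<in> {1..q}" using a F unfolding PP_def by auto
      moreover have "F \<subseteq> M_facet q a"
      proof
        fix p assume p: "p \<in> F"
        obtain i j where pij: "p = (i,j)" by (cases p)
        show "p \<in> M_facet q a"
        proof (cases "i = j")
          case True
          then show ?thesis using du[of i a] p pij a unfolding M_facet_def by auto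
        next
          case False
          then show ?thesis using p pij F unfolding M_facet_def M_off_def PP_def by auto
        qed
      qed
      ultimately show ?thesis unfolding M_complex_def by blast
    next
      case False
      have "F \<subseteq> M_facet q 1"
      proof
        fix p assume p: "p \<in> F"
        obtain i j where pij: "p = (i,j)" by (cases p)
        have "i \<noteq> j" using False p pij by blast
        then show "p \<in> M_facet q 1" using p pij F unfolding M_facet_def M_off_def PP_def by auto
      qed
      then show ?thesis unfolding M_complex_def using assms by auto
    qed
    then show "\<gamma> \<in> (\<lambda>F. ell q ` F) ` M_complex q" using F by blast
  qed
next
  show "(\<lambda>F. ell q ` F) ` M_complex q \<subseteq> scarf (Tq2_gens q)"
  proof
    fix \<gamma> assume "\<gamma> \<in> (\<lambda>F. ell q ` F) ` M_complex q"
    then obtain F i where g: "\<gamma> = ell q ` F" and i: "i \<in> {1..q}" and Fi: "F \<subseteq> M_facet q i"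
      unfolding M_complex_def by blast
    have FP: "F \<subseteq> PP q" using Fi i unfolding M_facet_def M_off_def PP_def by auto
    have finF: "finite F" using FP finite_PP finite_subset by blast
    have Fd: "\<forall>p\<in>F. fst p \<noteq> snd p \<or> p = (i,i)" using Fi unfolding M_facet_def M_off_def by auto
    have "\<gamma> \<in> taylor (Tq2_gens q)" using FP g unfolding taylor_def gens_eq by auto
    moreover have "mono_lcm \<gamma>' \<noteq> mono_lcm \<gamma>" if g': "\<gamma>' \<in> taylor (Tq2_gens q)" "\<gamma>' \<noteq> \<gamma>" for \<gamma>'
    proof -
      have "\<gamma>' \<subseteq> ell q ` PP q" using g' unfolding taylor_def gens_eq by auto
      then obtain G where G: "G \<subseteq> PP q" "\<gamma>' = ell q ` G" using sub_gens by blast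
      have finG: "finite G" using G finite_PP finite_subset by blast
      have GF: "G \<noteq> F" using g g' G by auto
      show ?thesis
      proof (cases "G \<subseteq> F")
        case False
        then obtain e where e: "e \<in> G" "e \<notin> F" by blast
        have eP: "e \<in> PP q" using e G by auto
        obtain \<sigma> where s: "\<sigma> permutes {1..q}" and
          H: "\<forall>p\<in>PP q. p \<noteq> e \<longrightarrow> (fst p \<noteq> snd p \<or> p = (i,i)) \<longrightarrow>
           \<sigma> (fst p) + \<sigma> (snd p) < \<sigma> (fst e) + \<sigma> (snd e)"
          using key[OF eP i] by blast
        let ?f = "\<lambda>p. ell q p \<sigma>"
        have lt: "\<forall>p\<in>F. ?f p < ?f e" using H Fd FP e(2) s by (auto simp: ell_val)
        have pos: "0 < ?f e" using s eP perm_facts[OF s, of "fst e"] unfolding PP_def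
          by (auto simp: ell_val)
        have "mono_lcm \<gamma> \<sigma> < ?f e" unfolding g lcm_eval by (rule max_lt[OF finF lt pos])
        moreover have "?f e \<le> mono_lcm \<gamma>' \<sigma>" unfolding G(2) lcm_eval by (rule max_ge[OF finG e(1)])
        ultimately show ?thesis by (metis not_le)
      next
        case True
        then obtain e where e: "e \<in> F" "e \<notin> G" using GF by blast
        have eP: "e \<in> PP q" using e FP by auto
        obtain \<sigma> where s: "\<sigma> permutes {1..q}" and
          H: "\<forall>p\<in>PP q. p \<noteq> e \<longrightarrow> (fst p \<noteq> snd p \<or> p = (i,i)) \<longrightarrow>
           \<sigma> (fst p) + \<sigma> (snd p) < \<sigma> (fst e) + \<sigma> (snd e)"
          using key[OF eP i] by blast
        let ?f = "\<lambda>p. ell q p \<sigma>"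
        have lt: "\<forall>p\<in>G. ?f p < ?f e"
        proof
          fix p assume pG: "p \<in> G"
          then have "p \<in> F" "p \<noteq> e" using True e(2) by auto
          then have "\<sigma> (fst p) + \<sigma> (snd p) < \<sigma> (fst e) + \<sigma> (snd e)"
            using H Fd FP by blast
          then show "?f p < ?f e" using s by (simp add: ell_val)
        qed
        have pos: "0 < ?f e" using s eP perm_facts[OF s, of "fst e"] unfolding PP_def
          by (auto simp: ell_val)
        have "mono_lcm \<gamma>' \<sigma> < ?f e" unfolding G(2) lcm_eval by (rule max_lt[OF finG lt pos])
        moreover have "?f e \<le> mono_lcm \<gamma> \<sigma>" unfolding g lcm_eval by (rule max_ge[OF finF e(1)])
        ultimately show ?thesis by (metis not_le)
      qed
    qed
    ultimately show "\<gamma> \<in> scarf (Tq2_gens q)" unfolding scarf_def by blast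
  qed
qed

end
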